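(* Let $a$ be an element of a ring $K$ such that $l_0a^m+l_1a^{m-1}+\dots+l_{m-1}a=0$ for some positive integer $m$ and integers $l_0,\dots,l_{m-1}$ with $l_0>0$ and $\gcd(l_0,l_1,\dots,l_{m-1})=1$, and such that $d\,f(a)=0$ for some integer $d>1$ and some monic $f\in\mathbb{Z}[x]$ with $f(0)=0$. Then $\varphi(a)=0$ for some monic $\varphi\in\mathbb{Z}[x]$ with $\varphi(0)=0$ and $\deg\varphi\le m$.
   Context: Rings are associative and not necessarily unital. *)

theory Defs
  imports "HOL-Computational_Algebra.Polynomial"
begin

text \<open>Rings are associative and not necessarily unital: we use the type class ring
  (semiring with additive group, no unit). Integer multiples and positive powers are
  defined explicitly since of_int and power need a unit.\<close>

definition zsmul :: "int \<Rightarrow> 'a::ab_group_add \<Rightarrow> 'a" where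
  "zsmul k x = (if 0 \<le> k then (\<Sum>i<nat k. x) else - (\<Sum>i<nat (- k). x))"

text \<open>Positive powers: ppow a n = a^n for n \<ge> 1 (the value at n = 0 is irrelevant).\<close>
fun ppow :: "'a::semigroup_mult \<Rightarrow> nat \<Rightarrow> 'a" where
  "ppow a 0 = a"
| "ppow a (Suc 0) = a"
| "ppow a (Suc (Suc n)) = a * ppow a (Suc n)"

definition peval :: "int poly \<Rightarrow> 'a::ring \<Rightarrow> 'a" where
  "peval f a = (\<Sum>i\<in>{1..degree f}. zsmul (coeff f i) (ppow a i))"

end

theory Submission
  imports Defs "HOL-Computational_Algebra.Primes"
begin


definition FF :: "nat \<Rightarrow> 'a::ab_group_add \<Rightarrow> 'a" where "FF n x = (\<Sum>i<n. x)"

lemma FF_add_n: "FF (a+b) x = FF a x + FF b x"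
  by (induction b) (auto simp: FF_def add.assoc)

lemma FF_0[simp]: "FF 0 x = 0" by (simp add: FF_def)

lemma zsmul_alt: "zsmul k x = FF (nat k) x - FF (nat (-k)) x"
  by (auto simp: zsmul_def FF_def)

lemma FF_diff:
  assumes "int a - int b = int a' - int b'"
  shows "FF a x - FF b x = FF a' x - FF b' x"
proof -
  have "a + b' = a' + b" using assms by linarith
  hence "FF (a+b') x = FF (a'+b) x" by simp
  hence "FF a x + FF b' x = FF a' x + FF b x" by (simp add: FF_add_n)
  thus ?thesis by (simp add: algebra_simps)
qed

lemma zsmul_add_left: "zsmul (k1+k2) x = zsmul k1 x + zsmul k2 x"
proof -
  have "zsmul (k1+k2) x = FF (nat k1 + nat k2) x - FF (nat (-k1) + nat (-k2)) x"
    unfolding zsmul_alt by (rule FF_diff) simp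
  thus ?thesis by (simp add: FF_add_n zsmul_alt algebra_simps)
qed

lemma zsmul_0[simp]: "zsmul 0 x = 0" by (simp add: zsmul_def)
lemma zsmul_1[simp]: "zsmul 1 x = x" by (simp add: zsmul_def)
lemma zsmul_zero_right[simp]: "zsmul k 0 = 0" by (simp add: zsmul_def)

lemma zsmul_uminus_left: "zsmul (-k) x = - zsmul k x"
  using zsmul_add_left[of k "-k" x] by (simp add: eq_neg_iff_add_eq_0 add.commute)

lemma zsmul_add_right: "zsmul k (x+y) = zsmul k x + zsmul k y"
  by (simp add: zsmul_def sum.distrib algebra_simps)

lemma zsmul_uminus_right: "zsmul k (-x) = - zsmul k x"
  using zsmul_add_right[of k x "-x"] by (simp add: eq_neg_iff_add_eq_0 add.commute)

lemma zsmul_mult_left: "zsmul k ((a::'a::ring) * x) = a * zsmul k x"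
  by (simp add: zsmul_def sum_distrib_left)

lemma zsmul_mult: "zsmul (k1*k2) x = zsmul k1 (zsmul k2 x)"
proof (induction k1 rule: int_induct[where k=0])
  case base then show ?case by simp
next
  case (step1 i) then show ?case by (simp add: distrib_right zsmul_add_left)
next
  case (step2 i) then show ?case
  proof -
    have "zsmul (i * k2) x = zsmul ((i - 1) * k2) x + zsmul k2 x"
      by (metis add.commute diff_add_cancel distrib_right mult_1 zsmul_add_left)
    moreover have "zsmul i (zsmul k2 x) = zsmul (i - 1) (zsmul k2 x) + zsmul k2 x"
      by (metis diff_add_cancel zsmul_1 zsmul_add_left)
    ultimately show ?case using step2 by simp
  qed
qed

lemma zsmul_sum: "zsmul k (\<Sum>i\<in>A. f i) = (\<Sum>i\<in>A. zsmul k (f i))"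
  by (induction A rule: infinite_finite_induct) (auto simp: zsmul_add_right)

lemma ppow_Suc: "i \<ge> 1 \<Longrightarrow> ppow a (Suc i) = a * ppow a i"
  by (cases i) auto

lemma peval_bound:
  assumes "degree g \<le> N"
  shows "peval g a = (\<Sum>i\<in>{1..N}. zsmul (coeff g i) (ppow a i))"
  unfolding peval_def
proof (rule sum.mono_neutral_left)
  show "\<forall>i\<in>{1..N} - {1..degree g}. zsmul (coeff g i) (ppow a i) = 0"
    by (auto simp: coeff_eq_0)
qed (use assms in auto)

lemma peval_add: "peval (g + h) a = peval g a + peval h a"
proof -
  let ?N = "max (degree g) (degree h)"
  have "degree (g+h) \<le> ?N" by (rule degree_add_le_max)
  thus ?thesis
    by (simp add: peval_bound[of _ ?N] zsmul_add_left sum.distrib)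
qed

lemma peval_uminus: "peval (- g) a = - peval g a"
  by (simp add: peval_def zsmul_uminus_left sum_negf)

lemma peval_smult: "peval (smult c g) a = zsmul c (peval g a)"
  by (simp add: peval_bound[of _ "degree g"] degree_smult_le zsmul_mult zsmul_sum)

lemma peval_pCons0:
  assumes "coeff g 0 = 0"
  shows "peval (pCons 0 g) a = a * peval g a"
proof -
  let ?N = "degree g"
  have "peval (pCons 0 g) a = (\<Sum>i\<in>{Suc 0..Suc ?N}. zsmul (coeff (pCons 0 g) i) (ppow a i))"
    using peval_bound[of "pCons 0 g" "Suc ?N" a] by (simp add: degree_pCons_le)
  also have "\<dots> = (\<Sum>i\<in>{0..?N}. zsmul (coeff g i) (ppow a (Suc i)))"
    by (subst sum.shift_bounds_cl_Suc_ivl) simp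
  also have "\<dots> = (\<Sum>i\<in>{1..?N}. zsmul (coeff g i) (ppow a (Suc i)))"
    using assms by (simp add: sum.atLeast_Suc_atMost[of 0])
  also have "\<dots> = (\<Sum>i\<in>{1..?N}. a * zsmul (coeff g i) (ppow a i))"
    by (rule sum.cong) (auto simp: ppow_Suc zsmul_mult_left)
  also have "\<dots> = a * peval g a"
    by (simp add: peval_def sum_distrib_left)
  finally show ?thesis .
qed

lemma peval_monom:
  assumes "k \<ge> 1"
  shows "peval (monom c k) a = zsmul c (ppow a k)"
proof -
  have "peval (monom c k) a = (\<Sum>i\<in>{1..k}. zsmul (coeff (monom c k) i) (ppow a i))"
    by (rule peval_bound) (simp add: degree_monom_le)
  also have "\<dots> = (\<Sum>i\<in>{1..k}. if i = k then zsmul c (ppow a i) else 0)"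
    by (rule sum.cong) (auto simp: coeff_monom)
  finally show ?thesis using assms by simp
qed




lemma split_p:
  fixes h :: "int poly"
  assumes "\<And>j. j \<ge> k \<Longrightarrow> p dvd coeff h j"
  shows "\<exists>y z. h = y + smult p z \<and> (\<forall>j\<ge>k. coeff y j = 0)"
proof -
  define z where "z = Poly (map (\<lambda>j. if k \<le> j then coeff h j div p else 0) [0..<Suc (degree h)])"
  have cz: "coeff z j = (if j \<le> degree h \<and> k \<le> j then coeff h j div p else 0)" for j
    by (auto simp: z_def nth_default_def simp del: upt_Suc)
  define y where "y = h - smult p z"
  have "coeff y j = 0" if "j \<ge> k" for j
  proof (cases "j \<le> degree h")
    case True
    then show ?thesis using assms[OF that] that by (simp add: y_def cz)
  next
    case False
    then show ?thesis by (simp add: y_def cz coeff_eq_0)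
  qed
  thus ?thesis by (intro exI[of _ y] exI[of _ z]) (auto simp: y_def)
qed

locale pid =
  fixes I :: "int poly set"
  assumes I_0: "0 \<in> I"
    and I_add: "g \<in> I \<Longrightarrow> h \<in> I \<Longrightarrow> g + h \<in> I"
    and I_mult: "g \<in> I \<Longrightarrow> q * g \<in> I"
begin

lemma I_smult: "g \<in> I \<Longrightarrow> smult c g \<in> I"
  using I_mult[of g "[:c:]"] by simp

lemma I_uminus: "g \<in> I \<Longrightarrow> - g \<in> I"
  using I_smult[of g "-1"] by simp

lemma I_diff: "g \<in> I \<Longrightarrow> h \<in> I \<Longrightarrow> g - h \<in> I"
proof -
  assume "g \<in> I" "h \<in> I"
  hence "g + (- h) \<in> I" by (intro I_add I_uminus)
  thus ?thesis by simp
qed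

lemma F1:
  assumes p: "prime p" and L: "L \<in> I" and u: "\<not> p dvd coeff L r"
    and hi: "\<And>j. j > r \<Longrightarrow> p dvd coeff L j"
  shows "\<exists>y z. degree y \<le> r \<and> g - y - smult p z \<in> I"
proof (induction "degree g" arbitrary: g rule: less_induct)
  case less
  show ?case
  proof (cases "degree g \<le> r")
    case True then show ?thesis by (intro exI[of _ g] exI[of _ 0]) (simp add: I_0)
  next
    case False
    define k where "k = degree g"
    define c where "c = coeff g k"
    have "coprime p (coeff L r)" using p u by (simp add: prime_imp_coprime)
    then obtain s t where "s * p + t * coeff L r = 1" using bezout_int[of p "coeff L r"] by auto
    hence t: "p dvd 1 - coeff L r * t" by (metis add_diff_cancel_right' dvd_triv_right mult.commute)
    define P where "P = monom 1 (k - r) * L"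
    have P: "P \<in> I" unfolding P_def by (rule I_mult[OF L])
    define h where "h = g - smult (c*t) P"
    have hdvd: "p dvd coeff h j" if "j \<ge> k" for j
    proof (cases "j = k")
      case True
      have "coeff P k = coeff L r"
        using \<open>\<not> degree g \<le> r\<close> by (simp add: P_def coeff_monom_mult k_def)
      hence "coeff h j = c * (1 - coeff L r * t)"
        using True by (simp add: h_def c_def algebra_simps)
      then show ?thesis using t by simp
    next
      case False
      with that have "j > k" by simp
      hence "coeff g j = 0" by (simp add: k_def coeff_eq_0)
      moreover have "coeff P j = coeff L (j - (k - r))"
        using \<open>j > k\<close> by (simp add: P_def coeff_monom_mult)
      moreover have "p dvd coeff L (j - (k - r))"
        using \<open>j > k\<close> \<open>\<not> degree g \<le> r\<close> k_def by (intro hi) linarith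
      ultimately show ?thesis by (simp add: h_def)
    qed
    have ex: "\<exists>y z. h = y + smult p z \<and> (\<forall>j\<ge>k. coeff y j = 0)"
      by (rule split_p) (rule hdvd)
    obtain y1 z1 where h1y1: "h = y1 + smult p z1 \<and> (\<forall>j\<ge>k. coeff y1 j = 0)"
      using ex by (elim exE)
    note h1 = conjunct1[OF h1y1] and y1 = conjunct2[OF h1y1]
    have "degree y1 \<le> k - 1" using y1 by (intro degree_le) auto
    hence "degree y1 < degree g" using False k_def by linarith
    from less[OF this] obtain y2 z2 where y2: "degree y2 \<le> r \<and> y1 - y2 - smult p z2 \<in> I"
      by (elim exE)
    have g_eq: "g = smult (c*t) P + y1 + smult p z1"
      using h1 unfolding h_def by (simp add: diff_eq_eq add.assoc)
    have eq: "g - y2 - smult p (z1 + z2) = smult (c*t) P + (y1 - y2 - smult p z2)"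
      unfolding g_eq smult_add_right by simp
    have mem: "g - y2 - smult p (z1 + z2) \<in> I"
      unfolding eq by (intro I_add I_smult P conjunct2[OF y2])
    show ?thesis using conjunct1[OF y2] mem by blast
  qed
qed

end



lemma sum_in_S:
  fixes K :: nat
  assumes S0: "0 \<in> S" and Sadd: "\<And>a b. a\<in>S \<Longrightarrow> b\<in>S \<Longrightarrow> a+b\<in>S"
    and "\<And>i. i < K \<Longrightarrow> f i \<in> S"
  shows "(\<Sum>i<K. f i) \<in> S"
  using assms(3) by (induction K) (auto intro: S0 Sadd)

lemma smult_sum_right: "smult c (\<Sum>i\<in>A. f i) = (\<Sum>i\<in>A. smult c (f i))"
  by (induction A rule: infinite_finite_induct) (auto simp: smult_add_right)

lemma nak:
  fixes K :: nat and p :: int and hs :: "nat \<Rightarrow> int poly" and S :: "int poly set"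
  assumes p: "prime p"
  shows "0 \<in> S \<Longrightarrow> (\<And>a b. a\<in>S \<Longrightarrow> b\<in>S \<Longrightarrow> a+b\<in>S) \<Longrightarrow> (\<And>a c. a\<in>S \<Longrightarrow> smult c a \<in> S)
    \<Longrightarrow> (\<And>j. j<K \<Longrightarrow> \<exists>cs. hs j - smult p (\<Sum>i<K. smult (cs i) (hs i)) \<in> S)
    \<Longrightarrow> \<exists>c. \<not> p dvd c \<and> (\<forall>j<K. smult c (hs j) \<in> S)"
proof (induction K arbitrary: S)
  case 0
  have "\<not> p dvd 1" using p by (metis not_prime_unit)
  then show ?case by (intro exI[of _ 1] conjI) auto
next
  case (Suc K)
  note S0 = Suc.prems(1) and Sadd = Suc.prems(2) and Ssm = Suc.prems(3) and hyp = Suc.prems(4)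
  define S' where "S' = {s + smult k (hs K) | s k. s \<in> S}"
  have S'0: "0 \<in> S'" unfolding S'_def using S0 by (intro CollectI exI[of _ 0]) auto
  have S'add: "a + b \<in> S'" if ab: "a \<in> S'" "b \<in> S'" for a b
  proof -
    obtain s1 k1 where "a = s1 + smult k1 (hs K)" "s1 \<in> S" using ab(1) S'_def by blast
    moreover obtain s2 k2 where "b = s2 + smult k2 (hs K)" "s2 \<in> S" using ab(2) S'_def by blast
    ultimately have "a + b = (s1 + s2) + smult (k1 + k2) (hs K)" "s1 + s2 \<in> S"
      by (auto simp: smult_add_left Sadd)
    thus ?thesis unfolding S'_def by blast
  qed
  have S'sm: "smult c a \<in> S'" if a: "a \<in> S'" for a c
  proof -
    obtain s1 k1 where "a = s1 + smult k1 (hs K)" "s1 \<in> S" using a S'_def by blast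
    hence "smult c a = smult c s1 + smult (c*k1) (hs K)" "smult c s1 \<in> S"
      by (auto simp: smult_add_right Ssm)
    thus ?thesis unfolding S'_def by blast
  qed
  have hyp': "\<exists>cs. hs j - smult p (\<Sum>i<K. smult (cs i) (hs i)) \<in> S'" if jK: "j < K" for j
  proof -
    obtain cs where cs: "hs j - smult p (\<Sum>i<Suc K. smult (cs i) (hs i)) \<in> S"
      using hyp[of j] jK by auto
    have "hs j - smult p (\<Sum>i<K. smult (cs i) (hs i)) =
        (hs j - smult p (\<Sum>i<Suc K. smult (cs i) (hs i))) + smult (p * cs K) (hs K)"
      by (simp add: smult_add_right)
    thus ?thesis using cs unfolding S'_def by blast
  qed
  from Suc.IH[OF S'0 S'add S'sm hyp'] obtain c' where c': "\<not> p dvd c'"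
    and c'S: "\<forall>j<K. smult c' (hs j) \<in> S'" by blast
  have "\<forall>j. \<exists>s k. j < K \<longrightarrow> s \<in> S \<and> smult c' (hs j) = s + smult k (hs K)"
    using c'S unfolding S'_def by blast
  then obtain sf tf where sft: "\<And>j. j < K \<Longrightarrow> sf j \<in> S \<and> smult c' (hs j) = sf j + smult (tf j) (hs K)"
    by metis
  obtain cs where E: "hs K - smult p (\<Sum>i<Suc K. smult (cs i) (hs i)) \<in> S"
    using hyp[of K] by auto
  define c'' where "c'' = c' - p * (\<Sum>i<K. cs i * tf i) - p * cs K * c'"
  have sum1: "(\<Sum>i<K. smult (cs i) (smult c' (hs i))) =
      (\<Sum>i<K. smult (cs i) (sf i)) + smult (\<Sum>i<K. cs i * tf i) (hs K)"
  proof -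
    have "(\<Sum>i<K. smult (cs i) (smult c' (hs i))) =
        (\<Sum>i<K. smult (cs i) (sf i) + smult (cs i * tf i) (hs K))"
      by (rule sum.cong) (auto simp: sft smult_add_right)
    also have "\<dots> = (\<Sum>i<K. smult (cs i) (sf i)) + smult (\<Sum>i<K. cs i * tf i) (hs K)"
      by (simp add: sum.distrib smult_sum)
    finally show ?thesis .
  qed
  have key: "smult c' (hs K - smult p (\<Sum>i<Suc K. smult (cs i) (hs i)))
      + smult p (\<Sum>i<K. smult (cs i) (sf i)) = smult c'' (hs K)"
  proof -
    define A where "A = (\<Sum>i<Suc K. smult (cs i) (hs i))"
    define B where "B = (\<Sum>i<K. smult (cs i) (sf i))"
    define T where "T = (\<Sum>i<K. cs i * tf i)"
    have hA: "smult c' A = B + smult (T + cs K * c') (hs K)"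
    proof -
      have "smult c' A = (\<Sum>i<K. smult (cs i) (smult c' (hs i))) + smult (cs K * c') (hs K)"
        unfolding A_def by (simp add: smult_sum_right smult_add_right mult.commute)
      thus ?thesis unfolding sum1 B_def T_def by (simp add: smult_add_left)
    qed
    have "smult c' (hs K - smult p A) + smult p B = smult c' (hs K) - smult p (smult c' A) + smult p B"
      by (simp add: smult_diff_right mult.commute)
    also have "\<dots> = smult c' (hs K) - smult (p * (T + cs K * c')) (hs K)"
      unfolding hA by (simp add: smult_add_right)
    also have "\<dots> = smult c'' (hs K)"
      unfolding c''_def T_def[symmetric] by (simp add: smult_diff_left algebra_simps)
    finally show ?thesis unfolding A_def B_def .
  qed
  have hK: "smult c'' (hs K) \<in> S"
    unfolding key[symmetric]
    by (intro Sadd Ssm E sum_in_S[OF S0 Sadd]) (auto simp: sft)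
  have "\<not> p dvd c''"
  proof
    assume "p dvd c''"
    hence "p dvd c'' + p * (\<Sum>i<K. cs i * tf i) + p * cs K * c'" by simp
    thus False using c' by (simp add: c''_def)
  qed
  hence ndvd: "\<not> p dvd c' * c''" using c' p by (simp add: prime_dvd_mult_iff)
  have "smult (c' * c'') (hs j) \<in> S" if "j < Suc K" for j
  proof (cases "j < K")
    case True
    have "smult (c' * c'') (hs j) = smult c'' (smult c' (hs j))" by (simp add: mult.commute)
    also have "\<dots> = smult c'' (sf j) + smult (tf j) (smult c'' (hs K))"
      using sft[OF True] by (simp add: smult_add_right mult.commute)
    finally have eqj: "smult (c' * c'') (hs j) = smult c'' (sf j) + smult (tf j) (smult c'' (hs K))" .
    have "sf j \<in> S" using sft[OF True] by simp
    then show ?thesis unfolding eqj by (intro Sadd Ssm hK)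
  next
    case False
    hence "j = K" using that by simp
    then show ?thesis using Ssm[OF hK, of c'] by (simp add: mult.commute)
  qed
  thus ?case using ndvd by blast
qed




context pid
begin

lemma F1N:
  assumes p: "prime p" and L: "L \<in> I" and u: "\<not> p dvd coeff L r"
    and hi: "\<And>j. j > r \<Longrightarrow> p dvd coeff L j"
  shows "\<exists>y z. degree y \<le> r \<and> g - y - smult (p^N) z \<in> I"
proof (induction N arbitrary: g)
  case 0
  show ?case by (intro exI[of _ 0] exI[of _ g]) (simp add: I_0)
next
  case (Suc N)
  obtain y z where yz: "degree y \<le> r" "g - y - smult (p^N) z \<in> I"
    using Suc by blast
  obtain y' z' where yz': "degree y' \<le> r" "z - y' - smult p z' \<in> I"
    using F1[OF p L u hi] by blast
  have eq: "g - (y + smult (p^N) y') - smult (p^Suc N) z' =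
      (g - y - smult (p^N) z) + smult (p^N) (z - y' - smult p z')"
    by (simp add: smult_diff_right smult_add_right algebra_simps)
  have "degree (y + smult (p^N) y') \<le> r"
    using yz(1) yz'(1) degree_smult_le[of "p^N" y']
    by (meson degree_add_le le_trans)
  moreover have "g - (y + smult (p^N) y') - smult (p^Suc N) z' \<in> I"
    unfolding eq by (intro I_add I_smult yz yz')
  ultimately show ?case by blast
qed

lemma F2:
  assumes f: "lead_coeff f = 1" and df: "smult d f \<in> I"
  shows "\<exists>w. (w = 0 \<or> degree w < degree f) \<and> smult d g - smult d w \<in> I"
proof -
  have f0: "f \<noteq> 0" using f by auto
  obtain q w where qw: "pseudo_divmod g f = (q, w)" by (metis surj_pair)
  have "g = f * q + w" using pseudo_divmod(1)[OF f0 qw] f by simp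
  hence "smult d g - smult d w = q * smult d f" by (simp add: smult_add_right mult.commute)
  moreover have "w = 0 \<or> degree w < degree f" using pseudo_divmod(2)[OF f0 qw] .
  ultimately show ?thesis using I_mult[OF df] by metis
qed

lemma sum_monoms_lt:
  fixes w :: "int poly"
  assumes "w = 0 \<or> degree w < n"
  shows "(\<Sum>i<n. monom (coeff w i) i) = w"
proof (cases "w = 0")
  case True then show ?thesis by simp
next
  case False
  hence "degree w \<le> n - 1" "n > 0" using assms by auto
  hence "(\<Sum>i\<le>n-1. monom (coeff w i) i) = w" by (intro poly_as_sum_of_monoms')
  moreover have "{..<n} = {..n-1}" using \<open>n > 0\<close> by auto
  ultimately show ?thesis by simp
qed

lemma prime_case:
  assumes p: "prime p" and L: "L \<in> I" and Lm: "degree L \<le> m"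
    and ex: "\<exists>k\<le>m. \<not> p dvd coeff L k" and d: "d > 0"
    and f: "lead_coeff f = 1" and df: "smult d f \<in> I"
  shows "\<exists>g\<in>I. degree g \<le> m \<and> \<not> p dvd coeff g m"
proof -
  define R where "R = {k. k \<le> m \<and> \<not> p dvd coeff L k}"
  have Rfin: "finite R" and Rne: "R \<noteq> {}" using ex by (auto simp: R_def)
  define r where "r = Max R"
  have "r \<in> R" using Rfin Rne r_def by simp
  hence rm: "r \<le> m" and u: "\<not> p dvd coeff L r" by (auto simp: R_def)
  have hi: "p dvd coeff L j" if "j > r" for j
  proof (cases "j \<le> m")
    case True
    hence "j \<notin> R" using that Rfin r_def by (metis Max_ge not_le)
    then show ?thesis using True by (simp add: R_def)
  next
    case False
    then show ?thesis using Lm by (simp add: coeff_eq_0)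
  qed
  show ?thesis
  proof (cases "r = m")
    case True
    then show ?thesis using L Lm u by blast
  next
    case False
    hence rm': "r < m" using rm by simp
    have "\<not> is_unit p" using p not_prime_unit by blast
    then obtain d' where dd: "d = p ^ multiplicity p d * d'" and d': "\<not> p dvd d'"
      using multiplicity_decompose'[of d p] d by auto
    define e where "e = multiplicity p d"
    have dpe: "d = d' * p^e" using dd e_def by (simp add: mult.commute)
    define n where "n = degree f"
    define hs where "hs = (\<lambda>j. smult d' (monom 1 j) :: int poly)"
    define S where "S = {s. \<exists>i\<in>I. \<exists>y. degree y \<le> r \<and> s = i + y}"
    have S0: "0 \<in> S" unfolding S_def using I_0 by force
    have Sadd: "a + b \<in> S" if ab: "a \<in> S" "b \<in> S" for a b
    proof -
      obtain i1 y1 where "i1 \<in> I" "degree y1 \<le> r" "a = i1 + y1" using ab(1) S_def by blast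
      moreover obtain i2 y2 where "i2 \<in> I" "degree y2 \<le> r" "b = i2 + y2" using ab(2) S_def by blast
      ultimately have "i1 + i2 \<in> I" "degree (y1 + y2) \<le> r" "a + b = (i1 + i2) + (y1 + y2)"
        by (auto intro: I_add degree_add_le)
      thus ?thesis unfolding S_def by blast
    qed
    have Ssm: "smult c a \<in> S" if a: "a \<in> S" for a c
    proof -
      obtain i1 y1 where "i1 \<in> I" "degree y1 \<le> r" "a = i1 + y1" using a S_def by blast
      hence "smult c i1 \<in> I" "degree (smult c y1) \<le> r" "smult c a = smult c i1 + smult c y1"
        by (auto intro: I_smult le_trans[OF degree_smult_le] simp: smult_add_right)
      thus ?thesis unfolding S_def by blast
    qed
    have G: "\<exists>cs. smult d' g - smult p (\<Sum>i<n. smult (cs i) (hs i)) \<in> S" for g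
    proof -
      obtain y z where yz: "degree y \<le> r" "g - y - smult (p^Suc e) z \<in> I"
        using F1N[OF p L u hi] by blast
      obtain w where w: "w = 0 \<or> degree w < n" "smult d z - smult d w \<in> I"
        using F2[OF f df] n_def by blast
      define cs where "cs = (\<lambda>i. p^e * coeff w i)"
      have "(\<Sum>i<n. smult (cs i) (hs i)) = (\<Sum>i<n. smult (d' * p^e) (monom (coeff w i) i))"
        by (rule sum.cong) (auto simp: cs_def hs_def smult_monom mult.commute mult.left_commute)
      also have "\<dots> = smult (d' * p^e) w"
        by (simp add: smult_sum_right[symmetric] sum_monoms_lt[OF w(1)])
      finally have sumeq: "(\<Sum>i<n. smult (cs i) (hs i)) = smult (d' * p^e) w" .
      have "smult d' g - smult p (\<Sum>i<n. smult (cs i) (hs i)) =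
          (smult d' (g - y - smult (p^Suc e) z) + smult p (smult d z - smult d w)) + smult d' y"
        unfolding sumeq dpe
        by (simp add: smult_diff_right smult_add_right algebra_simps)
      moreover have "smult d' (g - y - smult (p^Suc e) z) + smult p (smult d z - smult d w) \<in> I"
        by (intro I_add I_smult yz w)
      moreover have "degree (smult d' y) \<le> r" using yz(1) le_trans[OF degree_smult_le] by blast
      ultimately show ?thesis unfolding S_def by blast
    qed
    have "\<exists>c. \<not> p dvd c \<and> (\<forall>j<n. smult c (hs j) \<in> S)"
    proof (rule nak[OF p])
      show "\<exists>cs. hs j - smult p (\<Sum>i<n. smult (cs i) (hs i)) \<in> S" for j
        using G[of "monom 1 j"] unfolding hs_def by simp
    qed (use S0 Sadd Ssm in auto)
    then obtain c where c: "\<not> p dvd c" and cS: "\<And>j. j < n \<Longrightarrow> smult c (hs j) \<in> S" by blast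
    obtain cs where cs: "smult d' (monom 1 m) - smult p (\<Sum>i<n. smult (cs i) (hs i)) \<in> S"
      using G by blast
    have "smult (c * d') (monom 1 m) =
        smult c (smult d' (monom 1 m) - smult p (\<Sum>i<n. smult (cs i) (hs i)))
        + smult p (\<Sum>i<n. smult (cs i) (smult c (hs i)))"
      by (simp add: smult_diff_right smult_sum_right mult.commute mult.left_commute)
    moreover have "smult p (\<Sum>i<n. smult (cs i) (smult c (hs i))) \<in> S"
      by (intro Ssm sum_in_S[OF S0] Sadd cS) auto
    ultimately have "smult (c * d') (monom 1 m) \<in> S"
      using Sadd Ssm cs by metis
    then obtain i y where iy: "i \<in> I" "degree y \<le> r" "smult (c * d') (monom 1 m) = i + y"
      unfolding S_def by blast
    have ieq: "i = monom (c * d') m - y" using iy(3) by (simp add: smult_monom algebra_simps)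
    have "degree i \<le> m"
      unfolding ieq using iy(2) rm'
      by (metis degree_diff_le degree_monom_le le_trans less_imp_le)
    moreover have "coeff i m = c * d'"
      unfolding ieq using iy(2) rm' by (simp add: coeff_eq_0)
    moreover have "\<not> p dvd c * d'" using c d' p by (simp add: prime_dvd_mult_iff)
    ultimately show ?thesis using iy(1) by metis
  qed
qed

end




context pid
begin

lemma core:
  assumes L: "L \<in> I" and Lm: "degree L \<le> m" and Lpos: "coeff L m > 0"
    and cont: "\<And>p. prime p \<Longrightarrow> \<exists>k\<le>m. \<not> p dvd coeff L k"
    and d: "d > 0" and f: "lead_coeff f = 1" and df: "smult d f \<in> I"
  shows "\<exists>\<phi>\<in>I. lead_coeff \<phi> = 1 \<and> degree \<phi> = m"
proof -
  define C where "C = {coeff g m | g. g \<in> I \<and> degree g \<le> m}"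
  have Csub: "c1 - k * c2 \<in> C" if cc: "c1 \<in> C" "c2 \<in> C" for c1 c2 k
  proof -
    obtain g1 where g1: "g1 \<in> I" "degree g1 \<le> m" "c1 = coeff g1 m" using cc(1) C_def by blast
    obtain g2 where g2: "g2 \<in> I" "degree g2 \<le> m" "c2 = coeff g2 m" using cc(2) C_def by blast
    have "g1 - smult k g2 \<in> I" using g1 g2 by (intro I_diff I_smult)
    moreover have "degree (g1 - smult k g2) \<le> m"
      using g1 g2 by (meson degree_diff_le degree_smult_le le_trans)
    moreover have "coeff (g1 - smult k g2) m = c1 - k * c2" using g1 g2 by simp
    ultimately show ?thesis unfolding C_def by (intro CollectI exI[of _ "g1 - smult k g2"]) auto
  qed
  have LC: "coeff L m \<in> C" using L Lm C_def by blast
  define \<gamma> where "\<gamma> = (LEAST n::nat. n > 0 \<and> int n \<in> C)"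
  have ex: "nat (coeff L m) > 0 \<and> int (nat (coeff L m)) \<in> C" using Lpos LC by simp
  have \<gamma>: "\<gamma> > 0 \<and> int \<gamma> \<in> C" unfolding \<gamma>_def by (rule LeastI[where P="\<lambda>n. n > 0 \<and> int n \<in> C", OF ex])
  have \<gamma>dvd: "int \<gamma> dvd c" if cC: "c \<in> C" for c
  proof -
    have mC: "c mod int \<gamma> \<in> C"
      using Csub[OF cC conjunct2[OF \<gamma>], of "c div int \<gamma>"] by (simp add: minus_div_mult_eq_mod)
    have lt: "c mod int \<gamma> < int \<gamma>" and ge: "c mod int \<gamma> \<ge> 0" using \<gamma> by auto
    have "c mod int \<gamma> = 0"
    proof (rule ccontr)
      assume "c mod int \<gamma> \<noteq> 0"
      hence "nat (c mod int \<gamma>) > 0 \<and> int (nat (c mod int \<gamma>)) \<in> C" using ge mC by simp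
      hence "\<gamma> \<le> nat (c mod int \<gamma>)" unfolding \<gamma>_def by (rule Least_le)
      thus False using lt ge by (simp add: nat_le_iff)
    qed
    thus ?thesis by (simp add: dvd_eq_mod_eq_0)
  qed
  show ?thesis
  proof (cases "\<gamma> = 1")
    case True
    then obtain g where g: "g \<in> I" "degree g \<le> m" "coeff g m = 1" using \<gamma> C_def by auto
    hence "degree g = m" by (metis le_antisym le_degree zero_neq_one)
    thus ?thesis using g by auto
  next
    case False
    then obtain p :: nat where p: "prime p" "p dvd \<gamma>" using prime_factor_nat by blast
    have pi: "prime (int p)" using p by simp
    obtain g where g: "g \<in> I" "degree g \<le> m" "\<not> int p dvd coeff g m"
      using prime_case[OF pi L Lm cont[OF pi] d f df] by blast
    have "int \<gamma> dvd coeff g m" using g C_def by (intro \<gamma>dvd) blast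
    moreover have "int p dvd int \<gamma>" using p by simp
    ultimately show ?thesis using g(3) dvd_trans by blast
  qed
qed

end


lemma pid_I: "pid {g. poly g 0 = 0 \<and> peval g (a::'a::ring) = 0}"
proof
  let ?I = "{g. poly g 0 = 0 \<and> peval g a = 0}"
  show "0 \<in> ?I" by (simp add: peval_def)
  show "g + h \<in> ?I" if "g \<in> ?I" "h \<in> ?I" for g h
    using that by (simp add: peval_add)
  show "q * g \<in> ?I" if g: "g \<in> ?I" for q g
  proof (induction q)
    case 0 then show ?case by (simp add: peval_def)
  next
    case (pCons c q)
    have h1: "smult c g \<in> ?I" using g by (simp add: peval_smult)
    have h2: "pCons 0 (q * g) \<in> ?I"
      using pCons.IH by (simp add: peval_pCons0 poly_0_coeff_0[symmetric])
    have "pCons c q * g = smult c g + pCons 0 (q * g)" by simp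
    then show ?case using h1 h2 by (simp add: peval_add)
  qed
qed

theorem lemma9:
  fixes a :: "'a::ring" and m :: nat and l :: "nat \<Rightarrow> int" and d :: int and f :: "int poly"
  assumes "m > 0"
    and "l 0 > 0"
    and "Gcd (l ` {..<m}) = 1"
    and "(\<Sum>i<m. zsmul (l i) (ppow a (m - i))) = 0"
    and "d > 1"
    and "lead_coeff f = 1"
    and "poly f 0 = 0"
    and "zsmul d (peval f a) = 0"
  shows "\<exists>\<phi> :: int poly. lead_coeff \<phi> = 1 \<and> poly \<phi> 0 = 0 \<and> degree \<phi> \<le> m \<and> peval \<phi> a = 0"
proof -
  define I where "I = {g. poly g 0 = 0 \<and> peval g a = 0}"
  interpret pid I unfolding I_def by (rule pid_I)
  define L where "L = (\<Sum>i<m. monom (l i) (m - i))"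
  have cL: "coeff L k = (if 1 \<le> k \<and> k \<le> m then l (m - k) else 0)" for k
  proof -
    have "coeff L k = (\<Sum>i<m. if i = m - k \<and> 1 \<le> k \<and> k \<le> m then l i else 0)"
      unfolding L_def coeff_sum by (rule sum.cong) (auto simp: coeff_monom)
    also have "\<dots> = (if 1 \<le> k \<and> k \<le> m then l (m - k) else 0)"
      using assms(1) by (auto simp: sum.delta)
    finally show ?thesis .
  qed
  have Lm: "degree L \<le> m" by (rule degree_le) (simp add: cL)
  have Lpos: "coeff L m > 0" using assms(1,2) by (simp add: cL)
  have "peval L a = (\<Sum>k\<in>{1..m}. zsmul (coeff L k) (ppow a k))" by (rule peval_bound[OF Lm])
  also have "\<dots> = (\<Sum>k\<in>{1..m}. zsmul (l (m - k)) (ppow a k))" by (rule sum.cong) (auto simp: cL)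
  also have "\<dots> = (\<Sum>i<m. zsmul (l i) (ppow a (m - i)))"
    by (rule sum.reindex_bij_witness[where i="\<lambda>i. m - i" and j="\<lambda>k. m - k"]) auto
  finally have "peval L a = 0" using assms(4) by simp
  moreover have "poly L 0 = 0" by (simp add: poly_0_coeff_0 cL)
  ultimately have LI: "L \<in> I" unfolding I_def by simp
  have cont: "\<exists>k\<le>m. \<not> p dvd coeff L k" if p: "prime p" for p
  proof (rule ccontr)
    assume "\<not> ?thesis"
    hence all: "\<forall>k\<le>m. p dvd coeff L k" by blast
    have "p dvd l i" if "i < m" for i
    proof -
      have "p dvd coeff L (m - i)" using all by simp
      moreover have "coeff L (m - i) = l i" using that by (simp add: cL)
      ultimately show ?thesis by simp
    qed
    hence "p dvd Gcd (l ` {..<m})" by (intro Gcd_greatest) auto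
    thus False using p assms(3) by (simp add: not_prime_unit)
  qed
  have dfI: "smult d f \<in> I" unfolding I_def using assms(7,8) by (simp add: peval_smult)
  obtain \<phi> where "\<phi> \<in> I" "lead_coeff \<phi> = 1" "degree \<phi> = m"
    using core[OF LI Lm Lpos cont _ assms(6) dfI] assms(5) by auto
  thus ?thesis unfolding I_def by auto
qed


end
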